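(* Let $q\in\mathbb{C}\setminus\{0\}$, let $P,f\in\mathbb{C}[x^{-1}][[x]]$ with $P\ne0$ satisfy $x\sigma_qf+f=P$, and let $n,k$ be integers with $1\le k\le n$. For $0\le j\le k$ set $$A_{k;j}=\prod_{\substack{0\le \ell\le k\\ \ell\ne j}}(P_j-P_\ell)\in\mathbb{C}[x^{-1}][[x]].$$ Then $$L_{n,k}^P(f^n)=(-1)^{k(2n-k+1)/2}\sum_{j=0}^{k}\frac{1}{A_{k;j}}\,(f-P_j)^n .$$
   Context: $\mathbb{C}[x^{-1}][[x]]$ is the field of formal Laurent series; $\sigma_qf(x)=f(qx)$; field elements act as multiplication operators and products of operators are compositions. $P_0=0$, $P_1=P$, $P_m=\sum_{k=0}^{m-1}(-x\sigma_q)^kP$ for $m\ge2$; the $P_m$ are pairwise distinct, so $A_{k;j}\neq0$. The operators $L_{n,k}^P$ are defined by $L_{n,1}^P=\frac{1}{P_1}\left(x^n\sigma_q-(-1)^n\right)$ and $L_{n,k+1}^P=\frac{1}{P_{k+1}}\left(x^{n-k}\sigma_q-(-1)^{n-k}\right)L_{n,k}^P$ for $1\le k<n$. *)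

theory Defs
  imports "HOL-Computational_Algebra.Formal_Laurent_Series"
begin

text \<open>The q-dilation operator sigma_q f(x) = f(qx) on formal Laurent series:
  coefficient n is multiplied by q to the power n (n an integer).\<close>
lift_definition sigma_q :: "complex \<Rightarrow> complex fls \<Rightarrow> complex fls"
  is "\<lambda>q f n. q powi n * f n"
  by (auto elim!: eventually_mono)

definition Pm :: "complex \<Rightarrow> complex fls \<Rightarrow> nat \<Rightarrow> complex fls" where
  "Pm q P m = (\<Sum>k<m. ((\<lambda>g. - (fls_X * sigma_q q g)) ^^ k) P)"

fun Lop :: "complex \<Rightarrow> complex fls \<Rightarrow> nat \<Rightarrow> nat \<Rightarrow> complex fls \<Rightarrow> complex fls" where
  "Lop q P n 0 g = g"
| "Lop q P n (Suc k) g =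
     inverse (Pm q P (Suc k)) *
       (fls_X ^ (n - k) * sigma_q q (Lop q P n k g) - (-1) ^ (n - k) * Lop q P n k g)"

definition Akj :: "complex \<Rightarrow> complex fls \<Rightarrow> nat \<Rightarrow> nat \<Rightarrow> complex fls" where
  "Akj q P k j = (\<Prod>l\<in>{0..k} - {j}. (Pm q P j - Pm q P l))"

end

theory Submission
  imports Defs
begin

unbundle fps_syntax

lemma sig_nth [simp]: "sigma_q q f $$ n = q powi n * f $$ n"
  by transfer simp

lemma sig_add: "sigma_q q (f + g) = sigma_q q f + sigma_q q g"
  by (simp add: fls_eq_iff algebra_simps)
lemma sig_diff: "sigma_q q (f - g) = sigma_q q f - sigma_q q g"
  by (simp add: fls_eq_iff algebra_simps)
lemma sig_uminus: "sigma_q q (- f) = - sigma_q q f"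
  by (simp add: fls_eq_iff algebra_simps)
lemma sig_zero [simp]: "sigma_q q 0 = 0"
  by (simp add: fls_eq_iff)
lemma sig_one [simp]: "sigma_q q 1 = 1"
  by (simp add: fls_eq_iff)

lemma sig_eq0: "q \<noteq> 0 \<Longrightarrow> sigma_q q f = 0 \<longleftrightarrow> f = 0"
  by (auto simp: fls_eq_iff)

lemma sig_subdeg: assumes "q \<noteq> 0" shows "fls_subdegree (sigma_q q f) = fls_subdegree f"
proof (cases "f = 0")
  case False
  show ?thesis
    by (rule fls_subdegree_eqI) (use False assms in auto)
qed simp

lemma X_times_nth: "(fls_X * (f::complex fls)) $$ n = f $$ (n - 1)"
  using fls_X_times_conv_shift(1)[of f] by simp

lemma sig_mult: assumes "q \<noteq> 0" shows "sigma_q q (f * g) = sigma_q q f * sigma_q q g"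
proof (rule fls_eqI)
  fix n
  show "sigma_q q (f * g) $$ n = (sigma_q q f * sigma_q q g) $$ n"
    using assms
    apply (simp add: fls_times_nth(2)[of f g] fls_times_nth(2)[of "sigma_q q f"] sig_subdeg
         sum_distrib_left)
    apply (rule sum.cong, simp)
    apply (simp add: power_int_diff field_simps)
    done
qed

lemma sig_power: "q \<noteq> 0 \<Longrightarrow> sigma_q q (f ^ n) = sigma_q q f ^ n"
  by (induction n) (simp_all add: sig_mult)

lemma sig_prod: "q \<noteq> 0 \<Longrightarrow> sigma_q q (\<Prod>l\<in>S. g l) = (\<Prod>l\<in>S. sigma_q q (g l))"
  by (induction S rule: infinite_finite_induct) (simp_all add: sig_mult)

lemma sig_inverse: assumes "q \<noteq> 0" shows "sigma_q q (inverse f) = inverse (sigma_q q f)"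
proof (cases "f = 0")
  case False
  have "sigma_q q f * sigma_q q (inverse f) = 1"
    using False assms by (simp flip: sig_mult)
  then show ?thesis by (metis inverse_unique)
qed simp

lemma sig_neg1_pow: "q \<noteq> 0 \<Longrightarrow> sigma_q q ((-1) ^ m) = (-1) ^ m"
  by (simp add: sig_power sig_uminus)

definition T :: "complex \<Rightarrow> complex fls \<Rightarrow> complex fls" where
  "T q g = - (fls_X * sigma_q q g)"

lemma T_add: "T q (a + b) = T q a + T q b"
  by (simp add: T_def sig_add algebra_simps)
lemma T_diff: "T q (a - b) = T q a - T q b"
  by (simp add: T_def sig_diff algebra_simps)
lemma T_zero [simp]: "T q 0 = 0" by (simp add: T_def)

lemma T_nz: "q \<noteq> 0 \<Longrightarrow> g \<noteq> 0 \<Longrightarrow> T q g \<noteq> 0"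
  by (simp add: T_def sig_eq0)

lemma T_nth: "T q g $$ n = - (q powi (n - 1) * g $$ (n - 1))"
  by (simp add: T_def X_times_nth)

lemma Pm_0 [simp]: "Pm q P 0 = 0" by (simp add: Pm_def)

lemma Pm_Suc: "Pm q P (Suc j) = P + T q (Pm q P j)"
proof (induction j)
  case 0
  then show ?case by (simp add: Pm_def)
next
  case (Suc j)
  have "Pm q P (Suc (Suc j)) = Pm q P (Suc j) + ((\<lambda>g. - (fls_X * sigma_q q g)) ^^ Suc j) P"
    by (simp add: Pm_def)
  also have "((\<lambda>g. - (fls_X * sigma_q q g)) ^^ Suc j) P = T q (((\<lambda>g. - (fls_X * sigma_q q g)) ^^ j) P)"
    by (simp add: T_def)
  also have "Pm q P (Suc j) + T q (((\<lambda>g. - (fls_X * sigma_q q g)) ^^ j) P)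
     = P + T q (Pm q P j + ((\<lambda>g. - (fls_X * sigma_q q g)) ^^ j) P)"
    using Suc by (simp add: T_add)
  also have "Pm q P j + ((\<lambda>g. - (fls_X * sigma_q q g)) ^^ j) P = Pm q P (Suc j)"
    by (simp add: Pm_def)
  finally show ?case .
qed

lemma Pm_Suc_low: assumes "q \<noteq> 0"
  shows "\<forall>k \<le> fls_subdegree P. Pm q P (Suc m) $$ k = P $$ k"
proof (induction m)
  case 0
  then show ?case by (simp add: Pm_Suc)
next
  case (Suc m)
  show ?case
  proof (intro allI impI)
    fix k assume k: "k \<le> fls_subdegree P"
    have "Pm q P (Suc m) $$ (k - 1) = P $$ (k - 1)" using Suc k by simp
    also have "\<dots> = 0" using k by simp
    finally show "Pm q P (Suc (Suc m)) $$ k = P $$ k"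
      by (simp add: Pm_Suc[of q P "Suc m"] T_nth)
  qed
qed

lemma Pm_Suc_nz: assumes "q \<noteq> 0" "P \<noteq> 0" shows "Pm q P (Suc m) \<noteq> 0"
proof
  assume "Pm q P (Suc m) = 0"
  then have "P $$ fls_subdegree P = 0" using Pm_Suc_low[OF assms(1), of P m] by auto
  with assms show False by simp
qed

lemma Pm_distinct: assumes "q \<noteq> 0" "P \<noteq> 0"
  shows "j \<noteq> l \<Longrightarrow> Pm q P j \<noteq> Pm q P l"
proof (induction j arbitrary: l)
  case 0
  then obtain l' where "l = Suc l'" by (cases l) auto
  then show ?case using Pm_Suc_nz[OF assms, of l'] by simp
next
  case (Suc j)
  show ?case
  proof (cases l)
    case 0
    then show ?thesis using Pm_Suc_nz[OF assms, of j] by simp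
  next
    case (Suc l')
    with Suc.prems have "Pm q P j - Pm q P l' \<noteq> 0" using Suc.IH by simp
    then have "T q (Pm q P j - Pm q P l') \<noteq> 0" using T_nz assms by blast
    then show ?thesis using Suc by (simp add: Pm_Suc T_diff)
  qed
qed


lemma pf_coef:
  fixes a b P1 P2 :: "'a::field"
  assumes "P1 \<noteq> 0" "P2 \<noteq> 0" "b \<noteq> 0" "a * P1 = (a - b) * P2"
  shows "inverse b * (inverse P1 - inverse P2) = inverse (a * P1)"
proof -
  define Q where "Q = inverse (a * P1)"
  have a: "a \<noteq> 0" using assms(2,3,4) by (metis diff_0 mult_eq_0_iff neg_0_equal_iff_equal)
  have ab: "a - b \<noteq> 0" using assms(1,4) a by (metis mult_eq_0_iff)
  have i1: "inverse P1 = a * Q"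
  proof -
    have "a * Q = a * (inverse a * inverse P1)" unfolding Q_def by (rule arg_cong[where f="\<lambda>x. a * x"], rule inverse_mult_distrib)
    also have "\<dots> = inverse P1" using a by (simp add: mult.assoc[symmetric])
    finally show ?thesis by (rule sym)
  qed
  have i2: "inverse P2 = (a - b) * Q"
  proof -
    have "(a - b) * Q = (a - b) * (inverse (a - b) * inverse P2)" unfolding Q_def assms(4)
      by (rule arg_cong[where f="\<lambda>x. (a - b) * x"], rule inverse_mult_distrib)
    also have "\<dots> = inverse P2" using ab by (simp add: mult.assoc[symmetric])
    finally show ?thesis by (rule sym)
  qed
  have d: "a * Q - (a - b) * Q = b * Q" by (simp add: algebra_simps)
  have "inverse b * (inverse P1 - inverse P2) = inverse b * (b * Q)" unfolding i1 i2 d ..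
  also have "\<dots> = (inverse b * b) * Q" by (rule mult.assoc[symmetric])
  also have "\<dots> = Q" using assms(3) by simp
  finally show ?thesis unfolding Q_def .
qed

lemma pf:
  fixes p :: "nat \<Rightarrow> 'a::field" and F :: "nat \<Rightarrow> 'a"
  assumes inj: "inj_on p {0..Suc k}" and p0: "p 0 = 0"
  shows "inverse (p (Suc k)) *
     ((\<Sum>j\<in>{0..k}. inverse (\<Prod>l\<in>{0..k}-{j}. p (Suc j) - p (Suc l)) * F (Suc j))
      - (\<Sum>j\<in>{0..k}. inverse (\<Prod>l\<in>{0..k}-{j}. p j - p l) * F j))
   = (\<Sum>j\<in>{0..Suc k}. inverse (\<Prod>l\<in>{0..Suc k}-{j}. p j - p l) * F j)"
proof -
  have nz: "(\<Prod>l\<in>S-{j}. p j - p l) \<noteq> 0" if "S \<subseteq> {0..Suc k}" "j \<in> {0..Suc k}" for S j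
  proof -
    have "finite (S - {j})" using that finite_subset by (metis finite_Diff finite_atLeastAtMost)
    then show ?thesis using that inj by (auto simp: inj_on_def)
  qed
  have pS: "p (Suc k) \<noteq> 0" using inj p0 by (metis Suc_neq_Zero atLeastAtMost_iff inj_on_def le0 order_refl)
  define c1 where "c1 j = (if 1 \<le> j then inverse (\<Prod>l\<in>{1..Suc k}-{j}. p j - p l) else 0)" for j
  define c2 where "c2 j = (if j \<le> k then inverse (\<Prod>l\<in>{0..k}-{j}. p j - p l) else 0)" for j
  have s1: "(\<Sum>j\<in>{0..k}. inverse (\<Prod>l\<in>{0..k}-{j}. p (Suc j) - p (Suc l)) * F (Suc j))
      = (\<Sum>j\<in>{0..Suc k}. c1 j * F j)"
  proof -
    have "(\<Sum>j\<in>{0..Suc k}. c1 j * F j) = (\<Sum>j\<in>{Suc 0..Suc k}. c1 j * F j)"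
      by (subst atLeast0_atMost_Suc_eq_insert_0) (simp add: c1_def image_Suc_atLeastAtMost)
    also have "\<dots> = (\<Sum>j\<in>{0..k}. c1 (Suc j) * F (Suc j))"
      by (rule sum.shift_bounds_cl_Suc_ivl)
    also have "\<dots> = (\<Sum>j\<in>{0..k}. inverse (\<Prod>l\<in>{0..k}-{j}. p (Suc j) - p (Suc l)) * F (Suc j))"
    proof (rule sum.cong[OF refl])
      fix j assume "j \<in> {0..k}"
      have "{1..Suc k} - {Suc j} = Suc ` ({0..k} - {j})"
        by (simp add: image_set_diff[OF inj_Suc] image_Suc_atLeastAtMost)
      then have "(\<Prod>l\<in>{1..Suc k}-{Suc j}. p (Suc j) - p l) = (\<Prod>l\<in>{0..k}-{j}. p (Suc j) - p (Suc l))"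
        by (simp add: prod.reindex)
      then show "c1 (Suc j) * F (Suc j) = inverse (\<Prod>l\<in>{0..k}-{j}. p (Suc j) - p (Suc l)) * F (Suc j)"
        by (simp add: c1_def)
    qed
    finally show ?thesis by simp
  qed
  have s2: "(\<Sum>j\<in>{0..k}. inverse (\<Prod>l\<in>{0..k}-{j}. p j - p l) * F j) = (\<Sum>j\<in>{0..Suc k}. c2 j * F j)"
    by (simp add: c2_def)
  have coef: "inverse (p (Suc k)) * (c1 j - c2 j) = inverse (\<Prod>l\<in>{0..Suc k}-{j}. p j - p l)"
    if j: "j \<in> {0..Suc k}" for j
  proof -
    consider "j = 0" | "1 \<le> j" "j \<le> k" | "j = Suc k" using j by force
    then show ?thesis
    proof cases
      case 1
      have "{0..Suc k} - {j} = insert (Suc k) ({0..k} - {j})" using 1 by auto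
      then have e: "(\<Prod>l\<in>{0..Suc k}-{j}. p j - p l) = (p j - p (Suc k)) * (\<Prod>l\<in>{0..k}-{j}. p j - p l)"
        by (simp add: prod.insert)
      have h: "c1 j = 0" "c2 j = inverse (\<Prod>l\<in>{0..k}-{j}. p j - p l)" "p j = 0"
        using 1 p0 by (simp_all add: c1_def c2_def)
      show ?thesis unfolding e unfolding h by (simp add: inverse_mult_distrib)
    next
      case 2
      have "{0..Suc k} - {j} = insert (Suc k) ({0..k} - {j})" using 2 by auto
      then have e2: "(\<Prod>l\<in>{0..Suc k}-{j}. p j - p l) = (p j - p (Suc k)) * (\<Prod>l\<in>{0..k}-{j}. p j - p l)"
        by (simp add: prod.insert)
      have "{0..Suc k} - {j} = insert 0 ({1..Suc k} - {j})" using 2 by auto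
      then have e1: "(\<Prod>l\<in>{0..Suc k}-{j}. p j - p l) = (p j - p 0) * (\<Prod>l\<in>{1..Suc k}-{j}. p j - p l)"
        by (simp add: prod.insert)
      have "inverse (p (Suc k)) * (inverse (\<Prod>l\<in>{1..Suc k}-{j}. p j - p l) - inverse (\<Prod>l\<in>{0..k}-{j}. p j - p l))
          = inverse (p j * (\<Prod>l\<in>{1..Suc k}-{j}. p j - p l))"
        by (rule pf_coef) (use nz[of "{1..Suc k}" j] nz[of "{0..k}" j] j pS e1 e2 p0 in auto)
      then show ?thesis using 2 e1 p0 by (simp add: c1_def c2_def)
    next
      case 3
      have "{0..Suc k} - {j} = insert 0 ({1..Suc k} - {j})" using 3 by auto
      then have e1: "(\<Prod>l\<in>{0..Suc k}-{j}. p j - p l) = (p j - p 0) * (\<Prod>l\<in>{1..Suc k}-{j}. p j - p l)"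
        by (simp add: prod.insert)
      have h: "c2 j = 0" "c1 j = inverse (\<Prod>l\<in>{1..Suc k}-{j}. p j - p l)" "p j = p (Suc k)"
        using 3 by (simp_all add: c1_def c2_def)
      show ?thesis unfolding e1 unfolding h p0 using pS by (simp add: inverse_mult_distrib)
    qed
  qed
  have "inverse (p (Suc k)) * ((\<Sum>j\<in>{0..Suc k}. c1 j * F j) - (\<Sum>j\<in>{0..Suc k}. c2 j * F j))
     = (\<Sum>j\<in>{0..Suc k}. (inverse (p (Suc k)) * (c1 j - c2 j)) * F j)"
    by (simp add: sum_subtractf[symmetric] sum_distrib_left algebra_simps)
  also have "\<dots> = (\<Sum>j\<in>{0..Suc k}. inverse (\<Prod>l\<in>{0..Suc k}-{j}. p j - p l) * F j)"
    using coef by (intro sum.cong) auto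
  finally show ?thesis using s1 s2 by simp
qed

lemma sig_sum: "sigma_q q (\<Sum>l\<in>S. g l) = (\<Sum>l\<in>S. sigma_q q (g l))"
  by (induction S rule: infinite_finite_induct) (simp_all add: sig_add)

context
  fixes q :: complex and P f :: "complex fls"
  assumes q: "q \<noteq> 0" and hf: "fls_X * sigma_q q f + f = P"
begin

lemma K1: "fls_X * sigma_q q (f - Pm q P j) = - (f - Pm q P (Suc j))"
proof -
  have "fls_X * sigma_q q (f - Pm q P j) = fls_X * sigma_q q f - fls_X * sigma_q q (Pm q P j)"
    by (simp add: sig_diff algebra_simps)
  also have "fls_X * sigma_q q f = P - f" using hf by (simp add: algebra_simps)
  also have "fls_X * sigma_q q (Pm q P j) = - T q (Pm q P j)" by (simp add: T_def)
  finally show ?thesis by (simp add: Pm_Suc[of q P j] algebra_simps)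
qed

lemma K2: "fls_X ^ n * sigma_q q ((f - Pm q P j) ^ n) = (-1) ^ n * (f - Pm q P (Suc j)) ^ n"
proof -
  have "fls_X ^ n * sigma_q q ((f - Pm q P j) ^ n) = (fls_X * sigma_q q (f - Pm q P j)) ^ n"
    by (simp only: sig_power[OF q] power_mult_distrib)
  also have "\<dots> = (-1) ^ n * (f - Pm q P (Suc j)) ^ n" unfolding K1 by (rule power_minus)
  finally show ?thesis .
qed

lemma K3: "fls_X * sigma_q q (Pm q P j - Pm q P l) = - (Pm q P (Suc j) - Pm q P (Suc l))"
  by (simp add: Pm_Suc T_def sig_diff algebra_simps)

lemma K4: "finite S \<Longrightarrow> fls_X ^ card S * sigma_q q (\<Prod>l\<in>S. Pm q P j - Pm q P l)
   = (-1) ^ card S * (\<Prod>l\<in>S. Pm q P (Suc j) - Pm q P (Suc l))"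
proof (induction S rule: finite_induct)
  case empty
  then show ?case by simp
next
  case (insert x F)
  have "fls_X ^ card (insert x F) * sigma_q q (\<Prod>l\<in>insert x F. Pm q P j - Pm q P l)
     = (fls_X * sigma_q q (Pm q P j - Pm q P x)) * (fls_X ^ card F * sigma_q q (\<Prod>l\<in>F. Pm q P j - Pm q P l))"
    using insert by (simp add: sig_mult[OF q] mult_ac)
  also have "\<dots> = (-1) ^ card (insert x F) * (\<Prod>l\<in>insert x F. Pm q P (Suc j) - Pm q P (Suc l))"
    unfolding K3 insert.IH using insert by (simp add: algebra_simps)
  finally show ?case .
qed

end

lemma exp_step:
  fixes n k :: nat assumes "k < n"
  shows "Suc k * (2 * n - Suc k + 1) div 2 = k * (2 * n - k + 1) div 2 + (n - k)"
proof -
  obtain m where n: "n = k + m + 1" using assms by (metis add.commute add_Suc_right less_iff_Suc_add plus_1_eq_Suc)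
  have h: "Suc k * (2 * n - Suc k + 1) = k * (2 * n - k + 1) + (n - k) * 2"
    unfolding n by (simp add: algebra_simps)
  show ?thesis unfolding h by simp
qed

lemma ring_aux: "(i::'a::comm_ring) * (e * (s * A) - s * (e * B)) = e * s * (i * (A - B))"
  by (simp add: algebra_simps)

lemma main:
  fixes q :: complex and P f :: "complex fls" and n k :: nat
  assumes q: "q \<noteq> 0" and P: "P \<noteq> 0"
    and hf: "fls_X * sigma_q q f + f = P"
  shows "k \<le> n \<Longrightarrow> Lop q P n k (f ^ n) =
    (-1) ^ (k * (2 * n - k + 1) div 2) *
      (\<Sum>j\<in>{0..k}. inverse (Akj q P k j) * (f - Pm q P j) ^ n)"
proof (induction k)
  case 0
  then show ?case by (simp add: Akj_def)
next
  case (Suc k)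
  define G where "G j = (f - Pm q P j) ^ n" for j
  define \<epsilon> :: "complex fls" where "\<epsilon> = (-1) ^ (k * (2 * n - k + 1) div 2)"
  define A' where "A' j = (\<Prod>l\<in>{0..k}-{j}. Pm q P (Suc j) - Pm q P (Suc l))" for j
  have kn: "k < n" using Suc by simp
  have IH: "Lop q P n k (f ^ n) = \<epsilon> * (\<Sum>j\<in>{0..k}. inverse (Akj q P k j) * G j)"
    using Suc by (simp add: \<epsilon>_def G_def)
  have Xk: "(fls_X :: complex fls) ^ k \<noteq> 0" by simp
  have trm: "fls_X ^ (n - k) * (inverse (sigma_q q (Akj q P k j)) * sigma_q q (G j))
      = (-1) ^ (n - k) * (inverse (A' j) * G (Suc j))" if j: "j \<in> {0..k}" for j
  proof -
    have card: "card ({0..k} - {j}) = k" using j by simp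
    have a: "fls_X ^ k * sigma_q q (Akj q P k j) = (-1) ^ k * A' j"
      using K4[OF q hf, of "{0..k} - {j}" j] card by (simp add: Akj_def A'_def)
    have g: "fls_X ^ n * sigma_q q (G j) = (-1) ^ n * G (Suc j)"
      using K2[OF q hf] by (simp add: G_def)
    have xn: "(fls_X :: complex fls) ^ (n - k) = fls_X ^ n * inverse (fls_X ^ k)"
    proof -
      have "(fls_X :: complex fls) ^ (n - k) = fls_X ^ n / fls_X ^ k"
        by (rule power_diff) (use kn in simp_all)
      then show ?thesis by (simp only: divide_inverse)
    qed
    have "fls_X ^ (n - k) * (inverse (sigma_q q (Akj q P k j)) * sigma_q q (G j))
        = (fls_X ^ n * sigma_q q (G j)) * inverse (fls_X ^ k * sigma_q q (Akj q P k j))"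
      unfolding xn by (simp add: inverse_mult_distrib algebra_simps)
    also have "\<dots> = ((-1) ^ n * (-1) ^ k) * (inverse (A' j) * G (Suc j))"
    proof -
      have iv: "inverse ((-1) ^ k :: complex fls) = (-1) ^ k" by (simp add: power_inverse[symmetric])
      show ?thesis unfolding a g inverse_mult_distrib iv by (simp only: mult_ac)
    qed
    also have "(-1) ^ n * (-1) ^ k = ((-1) ^ (n - k) :: complex fls)"
    proof -
      have "(-1) ^ n * (-1) ^ k = ((-1) ^ (n - k) * (-1) ^ k * (-1) ^ k :: complex fls)"
        using kn by (simp flip: power_add)
      also have "\<dots> = (-1) ^ (n - k) * ((-1) ^ k * (-1) ^ k)" by (simp only: mult.assoc)
      also have "((-1) ^ k * (-1) ^ k :: complex fls) = 1" by (simp flip: power_mult_distrib)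
      finally show ?thesis by simp
    qed
    finally show ?thesis .
  qed
  have sigL: "fls_X ^ (n - k) * sigma_q q (Lop q P n k (f ^ n))
      = \<epsilon> * ((-1) ^ (n - k) * (\<Sum>j\<in>{0..k}. inverse (A' j) * G (Suc j)))"
  proof -
    have "fls_X ^ (n - k) * sigma_q q (Lop q P n k (f ^ n))
        = \<epsilon> * (\<Sum>j\<in>{0..k}. fls_X ^ (n - k) * (inverse (sigma_q q (Akj q P k j)) * sigma_q q (G j)))"
    proof -
      have "sigma_q q (Lop q P n k (f ^ n))
          = \<epsilon> * (\<Sum>j\<in>{0..k}. inverse (sigma_q q (Akj q P k j)) * sigma_q q (G j))"
        unfolding IH \<epsilon>_def by (simp add: sig_mult[OF q] sig_neg1_pow[OF q] sig_sum sig_inverse[OF q])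
      then show ?thesis by (simp only: sum_distrib_left mult_ac)
    qed
    also have "\<dots> = \<epsilon> * (\<Sum>j\<in>{0..k}. (-1) ^ (n - k) * (inverse (A' j) * G (Suc j)))"
      using trm by simp
    finally show ?thesis by (simp add: sum_distrib_left)
  qed
  have inj: "inj_on (Pm q P) {0..Suc k}"
    using Pm_distinct[OF q P] by (auto simp: inj_on_def)
  have pf': "inverse (Pm q P (Suc k)) *
     ((\<Sum>j\<in>{0..k}. inverse (A' j) * G (Suc j)) - (\<Sum>j\<in>{0..k}. inverse (Akj q P k j) * G j))
   = (\<Sum>j\<in>{0..Suc k}. inverse (Akj q P (Suc k) j) * G j)"
    using pf[OF inj, of G] by (simp add: A'_def Akj_def)
  have "Lop q P n (Suc k) (f ^ n) = \<epsilon> * (-1) ^ (n - k) *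
     (inverse (Pm q P (Suc k)) *
     ((\<Sum>j\<in>{0..k}. inverse (A' j) * G (Suc j)) - (\<Sum>j\<in>{0..k}. inverse (Akj q P k j) * G j)))"
    unfolding Lop.simps sigL unfolding IH by (rule ring_aux)
  also have "\<dots> = \<epsilon> * (-1) ^ (n - k) * (\<Sum>j\<in>{0..Suc k}. inverse (Akj q P (Suc k) j) * G j)"
    unfolding pf' ..
  also have "\<epsilon> * (-1) ^ (n - k) = ((-1) ^ (Suc k * (2 * n - Suc k + 1) div 2) :: complex fls)"
    unfolding \<epsilon>_def exp_step[OF kn] by (simp add: power_add)
  finally show ?case by (simp add: G_def)
qed

theorem lemma1:
  fixes q :: complex and P f :: "complex fls" and n k :: nat
  assumes "q \<noteq> 0" and "P \<noteq> 0"
    and "fls_X * sigma_q q f + f = P"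
    and "1 \<le> k" and "k \<le> n"
  shows "Lop q P n k (f ^ n) =
    (-1) ^ (k * (2 * n - k + 1) div 2) *
      (\<Sum>j\<in>{0..k}. inverse (Akj q P k j) * (f - Pm q P j) ^ n)"
  using main[OF assms(1-3)] assms(5) by blast

end
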